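(* On the shell $A_1=\{x\in\mathbb R^3:1<|x|<2\}$ with Euclidean metric $dr^2+r^2\tilde g$ ($\tilde g$ the round metric on $S^2$), let $q,Q$ be functions of $r$, $\tilde\alpha$ a one-form on $S^2$ and $\tilde\tau$ a trace-free symmetric $(0,2)$-tensor on $S^2$ (both independent of $r$). Then $\tau=2q\,\tilde\alpha\odot dr+Q\tilde\tau$ is a trace-free symmetric $(0,2)$-tensor on $A_1$, and $\mathrm{div}(\tau)=0$ holds if and only if $\widetilde{\mathrm{div}}\,\tilde\alpha=0$ and $(r^2q)'\tilde\alpha+Q\,\widetilde{\mathrm{div}}\,\tilde\tau=0$. Similarly, let $p,P$ be functions of $r$, $\tilde\eta$ a one-form on $S^2$ and $\tilde\sigma$ a trace-free symmetric $(0,2)$-tensor on $S^2$. Then $\sigma=2p\,\tilde\eta\odot dr+P\tilde\sigma$ is a trace-free symmetric $(0,2)$-tensor on $A_1$, and $L\sigma=0$ holds if $2r(rp)'\,\widetilde{\mathrm{div}}\,\tilde\eta+P\,\widetilde{\mathrm{div}}\,\widetilde{\mathrm{div}}\,\tilde\sigma=0$.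
   Context: $\mathrm{div}$ is the Euclidean divergence on $\mathbb R^3$, and $\widetilde{\mathrm{div}}$ is the divergence on tensors on $(S^2,\tilde g)$ (contraction of the covariant derivative). For one-forms $\alpha,\beta$, $(\alpha\odot\beta)_{ij}=\frac12(\alpha_i\beta_j+\alpha_j\beta_i)$. The linearized scalar curvature operator at the Euclidean metric is $L\sigma=\sum_{i,j}(\sigma_{ij,ij}-\sigma_{ii,jj})$ in Cartesian coordinates. Tensors on $S^2$ are pulled back to $A_1$ via $x\mapsto x/|x|$; $'$ denotes $d/dr$. *)

theory Defs
  imports "HOL-Analysis.Analysis"
begin

definition pd :: "3 \<Rightarrow> (real^3 \<Rightarrow> real) \<Rightarrow> real^3 \<Rightarrow> real" where
  "pd i f x = deriv (\<lambda>t. f (x + t *\<^sub>R axis i 1)) 0"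

inductive_set partials_of :: "(real^3 \<Rightarrow> real) \<Rightarrow> (real^3 \<Rightarrow> real) set" for f where
  self: "f \<in> partials_of f"
| step: "g \<in> partials_of f \<Longrightarrow> pd i g \<in> partials_of f"

definition smooth3 :: "(real^3) set \<Rightarrow> (real^3 \<Rightarrow> real) \<Rightarrow> bool" where
  "smooth3 S f \<longleftrightarrow> (\<forall>g\<in>partials_of f. g differentiable_on S)"

definition smooth1 :: "real set \<Rightarrow> (real \<Rightarrow> real) \<Rightarrow> bool" where
  "smooth1 S f \<longleftrightarrow> (\<forall>k. ((deriv ^^ k) f) differentiable_on S)"

definition A1 :: "(real^3) set" where
  "A1 = {x. 1 < norm x \<and> norm x < 2}"

definition div_euc :: "(real^3 \<Rightarrow> real^3^3) \<Rightarrow> real^3 \<Rightarrow> real^3" where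
  "div_euc T x = (\<chi> j. \<Sum>i\<in>UNIV. pd i (\<lambda>y. T y $ i $ j) x)"

text \<open>Linearized scalar curvature operator at the Euclidean metric.\<close>
definition Lop :: "(real^3 \<Rightarrow> real^3^3) \<Rightarrow> real^3 \<Rightarrow> real" where
  "Lop S x = (\<Sum>i\<in>UNIV. \<Sum>j\<in>UNIV.
      pd j (pd i (\<lambda>y. S y $ i $ j)) x - pd j (pd j (\<lambda>y. S y $ i $ i)) x)"

definition odot :: "real^3 \<Rightarrow> real^3 \<Rightarrow> real^3^3" where
  "odot u v = (\<chi> i j. (u $ i * v $ j + u $ j * v $ i) / 2)"

definition tr3 :: "real^3^3 \<Rightarrow> real" where
  "tr3 M = (\<Sum>i\<in>UNIV. M $ i $ i)"

definition symmetric3 :: "real^3^3 \<Rightarrow> bool" where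
  "symmetric3 M \<longleftrightarrow> (\<forall>i j. M $ i $ j = M $ j $ i)"

text \<open>A tensor field on S^2 is given by its ambient Cartesian components at the points
  of the unit sphere (values off the sphere are irrelevant): a one-form is
  a :: real^3 => real^3 with a w . w = 0 for |w| = 1; a (0,2)-tensor is t :: real^3 => real^3^3
  annihilating w in both slots.  Only the values on the unit sphere are used, via the
  0-homogeneous extension.\<close>

definition ext0 :: "(real^3 \<Rightarrow> 'a) \<Rightarrow> real^3 \<Rightarrow> 'a" where
  "ext0 f x = f (x /\<^sub>R norm x)"

definition on_sphere :: "real^3 \<Rightarrow> bool" where
  "on_sphere w \<longleftrightarrow> norm w = 1"

text \<open>Tangential projection P = I - w w^T (the round metric of S^2 as an ambient tensor).\<close>
definition proj :: "real^3 \<Rightarrow> 3 \<Rightarrow> 3 \<Rightarrow> real" where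
  "proj w k l = (if k = l then 1 else 0) - w $ k * w $ l"

definition tangent1 :: "(real^3 \<Rightarrow> real^3) \<Rightarrow> bool" where
  "tangent1 a \<longleftrightarrow> (\<forall>w. on_sphere w \<longrightarrow> a w \<bullet> w = 0)"

definition tangent2 :: "(real^3 \<Rightarrow> real^3^3) \<Rightarrow> bool" where
  "tangent2 t \<longleftrightarrow> (\<forall>w. on_sphere w \<longrightarrow> t w *v w = 0 \<and> w v* t w = 0)"

definition smooth_S2_1 :: "(real^3 \<Rightarrow> real^3) \<Rightarrow> bool" where
  "smooth_S2_1 a \<longleftrightarrow> (\<forall>i. smooth3 (- {0}) (\<lambda>x. ext0 a x $ i))"

definition smooth_S2_2 :: "(real^3 \<Rightarrow> real^3^3) \<Rightarrow> bool" where
  "smooth_S2_2 t \<longleftrightarrow> (\<forall>i j. smooth3 (- {0}) (\<lambda>x. ext0 t x $ i $ j))"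

definition tfs_S2 :: "(real^3 \<Rightarrow> real^3^3) \<Rightarrow> bool" where
  "tfs_S2 t \<longleftrightarrow> tangent2 t \<and> smooth_S2_2 t \<and>
     (\<forall>w. on_sphere w \<longrightarrow> symmetric3 (t w) \<and> tr3 (t w) = 0)"

definition oneform_S2 :: "(real^3 \<Rightarrow> real^3) \<Rightarrow> bool" where
  "oneform_S2 a \<longleftrightarrow> tangent1 a \<and> smooth_S2_1 a"

text \<open>Divergence on (S^2, round metric): contraction of the Levi-Civita covariant derivative,
  the latter computed as the tangential projection of the ambient derivative
  (Gauss formula for the embedded unit sphere).\<close>
definition sdiv1 :: "(real^3 \<Rightarrow> real^3) \<Rightarrow> real^3 \<Rightarrow> real" where
  "sdiv1 a w = (\<Sum>k\<in>UNIV. \<Sum>l\<in>UNIV. proj w k l * pd k (\<lambda>y. ext0 a y $ l) w)"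

definition sdiv2 :: "(real^3 \<Rightarrow> real^3^3) \<Rightarrow> real^3 \<Rightarrow> real^3" where
  "sdiv2 t w = (\<chi> j. \<Sum>m\<in>UNIV. proj w j m *
      (\<Sum>i\<in>UNIV. \<Sum>k\<in>UNIV. proj w i k * pd k (\<lambda>y. ext0 t y $ i $ m) w))"

definition dr :: "real^3 \<Rightarrow> real^3" where
  "dr x = x /\<^sub>R norm x"

definition pb1 :: "(real^3 \<Rightarrow> real^3) \<Rightarrow> real^3 \<Rightarrow> real^3" where
  "pb1 a x = (1 / norm x) *\<^sub>R a (x /\<^sub>R norm x)"

definition pb2 :: "(real^3 \<Rightarrow> real^3^3) \<Rightarrow> real^3 \<Rightarrow> real^3^3" where
  "pb2 t x = (1 / (norm x)\<^sup>2) *\<^sub>R t (x /\<^sub>R norm x)"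

definition mk_tensor :: "(real \<Rightarrow> real) \<Rightarrow> (real^3 \<Rightarrow> real^3) \<Rightarrow> (real \<Rightarrow> real)
    \<Rightarrow> (real^3 \<Rightarrow> real^3^3) \<Rightarrow> real^3 \<Rightarrow> real^3^3" where
  "mk_tensor q a Q t x = (2 * q (norm x)) *\<^sub>R odot (pb1 a x) (dr x) + Q (norm x) *\<^sub>R pb2 t x"

end

theory Submission
  imports Defs
begin

lemma pd_has_derivative:
  assumes "(f has_derivative f') (at x)"
  shows "pd k f x = f' (axis k 1)"
proof -
  have "((\<lambda>t. x + t *\<^sub>R axis k 1) has_derivative (\<lambda>t. t *\<^sub>R axis k 1)) (at 0)"
    by (auto intro!: derivative_eq_intros)
  then have "((\<lambda>t. f (x + t *\<^sub>R axis k 1)) has_derivative (\<lambda>t. f' (t *\<^sub>R axis k 1))) (at 0)"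
    using has_derivative_compose[of "\<lambda>t. x + t *\<^sub>R axis k 1" _ 0 UNIV f f'] assms by simp
  moreover have "(\<lambda>t. f' (t *\<^sub>R axis k 1)) = (\<lambda>t. f' (axis k 1) * t)"
    using linear_cmul[OF has_derivative_linear[OF assms]] by (auto simp: mult.commute)
  ultimately have "((\<lambda>t. f (x + t *\<^sub>R axis k 1)) has_field_derivative f' (axis k 1)) (at 0)"
    by (simp add: has_field_derivative_def)
  then show ?thesis unfolding pd_def by (rule DERIV_imp_deriv)
qed

lemma pd_local:
  assumes "open S" "x \<in> S" "\<And>y. y \<in> S \<Longrightarrow> f y = g y"
  shows "pd k f x = pd k g x"
  unfolding pd_def
proof (rule deriv_cong_ev)
  let ?U = "(\<lambda>t::real. x + t *\<^sub>R axis k 1) -` S"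
  have "open ?U" by (rule open_vimage[OF assms(1)]) (intro continuous_intros)
  moreover have "0 \<in> ?U" using assms(2) by simp
  ultimately show "\<forall>\<^sub>F t in nhds 0. f (x + t *\<^sub>R axis k 1) = g (x + t *\<^sub>R axis k 1)"
    unfolding eventually_nhds using assms(3) by blast
qed simp

lemma pd_zero_on:
  assumes "open S" "x \<in> S" "\<And>y. y \<in> S \<Longrightarrow> f y = 0"
  shows "pd k f x = 0"
proof -
  have "pd k f x = pd k (\<lambda>_. 0) x" by (rule pd_local[OF assms(1,2)]) (simp add: assms(3))
  also have "\<dots> = 0" by (subst pd_has_derivative[of _ "\<lambda>_. 0"]) (auto intro: derivative_intros)
  finally show ?thesis .
qed

lemma pd_frechet:
  assumes "f differentiable (at x)"
  shows "pd k f x = frechet_derivative f (at x) (axis k 1)"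
  using assms by (simp add: frechet_derivative_works pd_has_derivative)

lemma linear_expand3:
  assumes "linear L"
  shows "L (v::real^3) = (\<Sum>k\<in>UNIV. v $ k * L (axis k 1))"
proof -
  have "v = (\<Sum>k\<in>UNIV. v $ k *\<^sub>R axis k 1)"
    by (simp add: vec_eq_iff axis_def if_distrib cong: if_cong)
  then have "L v = L (\<Sum>k\<in>UNIV. v $ k *\<^sub>R axis k 1)" by simp
  also have "\<dots> = (\<Sum>k\<in>UNIV. v $ k * L (axis k 1))"
    using assms by (simp add: linear_sum linear_cmul)
  finally show ?thesis .
qed

lemma pd_sum:
  assumes "finite I" "\<And>i. i \<in> I \<Longrightarrow> f i differentiable (at x)"
  shows "pd k (\<lambda>y. \<Sum>i\<in>I. f i y) x = (\<Sum>i\<in>I. pd k (f i) x)"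
proof -
  have "((\<lambda>y. \<Sum>i\<in>I. f i y) has_derivative (\<lambda>h. \<Sum>i\<in>I. frechet_derivative (f i) (at x) h)) (at x)"
    using assms by (intro has_derivative_sum) (auto simp: frechet_derivative_works)
  then show ?thesis using assms by (simp add: pd_has_derivative pd_frechet)
qed

definition hom0 :: "(real^3 \<Rightarrow> real) \<Rightarrow> bool" where
  "hom0 f \<longleftrightarrow> (\<forall>c y. c > 0 \<longrightarrow> f (c *\<^sub>R y) = f y)"

lemma hom0_ext0: "hom0 (\<lambda>y. F (ext0 f y))"
  unfolding hom0_def ext0_def by (auto simp: divide_simps)

lemma euler:
  assumes "hom0 f" "(f has_derivative f') (at y)"
  shows "f' y = 0"
proof -
  have "((\<lambda>t. y + t *\<^sub>R y) has_derivative (\<lambda>t. t *\<^sub>R y)) (at 0)"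
    by (auto intro!: derivative_eq_intros)
  then have d: "((\<lambda>t. f (y + t *\<^sub>R y)) has_derivative (\<lambda>t. f' (t *\<^sub>R y))) (at 0)"
    using has_derivative_compose[of "\<lambda>t. y + t *\<^sub>R y" _ 0 UNIV f f'] assms by simp
  have "(\<lambda>t. f' (t *\<^sub>R y)) = (\<lambda>t. f' y * t)"
    using linear_cmul[OF has_derivative_linear[OF assms(2)]] by (auto simp: mult.commute)
  with d have d1: "((\<lambda>t. f (y + t *\<^sub>R y)) has_field_derivative f' y) (at 0)"
    by (simp add: has_field_derivative_def)
  have ev: "\<forall>\<^sub>F t in nhds 0. f (y + t *\<^sub>R y) = f y"
  proof -
    have "open {t::real. t > -1}" by (simp add: open_greaterThan[unfolded greaterThan_def])
    moreover have "\<forall>t\<in>{t::real. t > -1}. f (y + t *\<^sub>R y) = f y"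
    proof
      fix t :: real assume "t \<in> {t. t > -1}"
      then have "1 + t > 0" by simp
      then have "f ((1 + t) *\<^sub>R y) = f y" using assms(1) unfolding hom0_def by blast
      then show "f (y + t *\<^sub>R y) = f y" by (simp add: algebra_simps)
    qed
    ultimately show ?thesis unfolding eventually_nhds by (intro exI[of _ "{t::real. t > -1}"]) auto
  qed
  have "((\<lambda>t. f y) has_field_derivative 0) (at 0)" by simp
  then have "((\<lambda>t. f (y + t *\<^sub>R y)) has_field_derivative 0) (at 0)"
    using DERIV_cong_ev[OF refl ev refl] by simp
  then show ?thesis using d1 DERIV_unique by blast
qed

lemma pd_hom0_scale:
  assumes "hom0 f" "(f has_derivative f') (at w)" "c > 0"
  shows "pd k f (c *\<^sub>R w) = f' (axis k 1) / c"
proof -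
  have eq: "(\<lambda>t. f (c *\<^sub>R w + t *\<^sub>R axis k 1)) = (\<lambda>t. f (w + (t / c) *\<^sub>R axis k 1))"
  proof
    fix t
    have "c *\<^sub>R w + t *\<^sub>R axis k 1 = c *\<^sub>R (w + (t / c) *\<^sub>R axis k 1)"
      using assms(3) by (simp add: algebra_simps)
    then show "f (c *\<^sub>R w + t *\<^sub>R axis k 1) = f (w + (t / c) *\<^sub>R axis k 1)"
      using assms(1,3) unfolding hom0_def by simp
  qed
  have "((\<lambda>t. w + (t / c) *\<^sub>R axis k 1) has_derivative (\<lambda>t. (t / c) *\<^sub>R axis k 1)) (at 0)"
    using assms(3) by (auto intro!: derivative_eq_intros)
  then have d: "((\<lambda>t. f (w + (t / c) *\<^sub>R axis k 1)) has_derivative (\<lambda>t. f' ((t / c) *\<^sub>R axis k 1))) (at 0)"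
    using has_derivative_compose[of "\<lambda>t. w + (t / c) *\<^sub>R axis k 1" _ 0 UNIV f f'] assms by simp
  have e2: "(\<lambda>t. f' ((t / c) *\<^sub>R axis k 1)) = (*) (f' (axis k 1) / c)"
    using linear_cmul[OF has_derivative_linear[OF assms(2)]] by (auto simp: field_simps)
  have "((\<lambda>t. f (w + (t / c) *\<^sub>R axis k 1)) has_field_derivative (f' (axis k 1) / c)) (at 0)"
    unfolding has_field_derivative_def using d[unfolded e2] .
  then show ?thesis unfolding pd_def eq by (rule DERIV_imp_deriv)
qed

lemma pd_hom0_at:
  assumes "hom0 f" "f differentiable (at (x /\<^sub>R norm x))" "x \<noteq> 0"
  shows "pd k f x = pd k f (x /\<^sub>R norm x) / norm x"
proof -
  have "pd k f x = pd k f (norm x *\<^sub>R (x /\<^sub>R norm x))" using assms(3) by simp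
  also have "\<dots> = frechet_derivative f (at (x /\<^sub>R norm x)) (axis k 1) / norm x"
    using assms by (intro pd_hom0_scale) (auto simp: frechet_derivative_works)
  finally show ?thesis using assms(2) by (simp add: pd_frechet)
qed

lemma euler_pd:
  assumes "hom0 f" "f differentiable (at y)"
  shows "(\<Sum>k\<in>UNIV. y $ k * pd k f y) = 0"
proof -
  let ?D = "frechet_derivative f (at y)"
  have d: "(f has_derivative ?D) (at y)" using assms(2) by (simp add: frechet_derivative_works)
  have "(\<Sum>k\<in>UNIV. y $ k * pd k f y) = (\<Sum>k\<in>UNIV. y $ k * ?D (axis k 1))"
    using assms(2) by (simp add: pd_frechet)
  also have "\<dots> = ?D y" using linear_expand3[OF has_derivative_linear[OF d], of y] by (rule sym)
  also have "\<dots> = 0" by (rule euler[OF assms(1) d])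
  finally show ?thesis .
qed

lemma sdiv1_eq:
  assumes "\<And>l. (\<lambda>y. ext0 a y $ l) differentiable (at w)"
  shows "sdiv1 a w = (\<Sum>l\<in>UNIV. pd l (\<lambda>y. ext0 a y $ l) w)"
proof -
  have e: "(\<Sum>k\<in>UNIV. w $ k * pd k (\<lambda>y. ext0 a y $ l) w) = 0" for l
    using euler_pd[OF hom0_ext0 assms] .
  have "sdiv1 a w = (\<Sum>k\<in>UNIV. \<Sum>l\<in>UNIV. (if k = l then 1 else 0) * pd k (\<lambda>y. ext0 a y $ l) w
       - w $ l * (w $ k * pd k (\<lambda>y. ext0 a y $ l) w))"
    unfolding sdiv1_def by (intro sum.cong refl) (simp add: proj_def algebra_simps)
  also have "\<dots> = (\<Sum>k\<in>UNIV. \<Sum>l\<in>UNIV. (if k = l then 1 else 0) * pd k (\<lambda>y. ext0 a y $ l) w)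
       - (\<Sum>l\<in>UNIV. w $ l * (\<Sum>k\<in>UNIV. w $ k * pd k (\<lambda>y. ext0 a y $ l) w))"
  proof -
    have "(\<Sum>k\<in>UNIV. \<Sum>l\<in>UNIV. w $ l * (w $ k * pd k (\<lambda>y. ext0 a y $ l) w))
        = (\<Sum>l\<in>UNIV. \<Sum>k\<in>UNIV. w $ l * (w $ k * pd k (\<lambda>y. ext0 a y $ l) w))"
      by (rule sum.swap)
    also have "\<dots> = (\<Sum>l\<in>UNIV. w $ l * (\<Sum>k\<in>UNIV. w $ k * pd k (\<lambda>y. ext0 a y $ l) w))"
      by (simp add: sum_distrib_left)
    finally show ?thesis by (simp add: sum_subtractf)
  qed
  also have "\<dots> = (\<Sum>l\<in>UNIV. pd l (\<lambda>y. ext0 a y $ l) w)"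
  proof -
    have m: "(if k = l then 1 else 0) * (z::real) = (if k = l then z else 0)" for k l z by simp
    show ?thesis using e by (simp only: m sum.delta UNIV_I if_True finite_class.finite_UNIV) simp
  qed
  finally show ?thesis .
qed

lemma if01: "(if P then 1 else 0) * (z::real) = (if P then z else 0)" by simp

lemma ext0_on_sphere: "on_sphere w \<Longrightarrow> ext0 f w = f w"
  unfolding ext0_def on_sphere_def by simp

lemma tangent2_row:
  assumes "tangent2 t" "y \<noteq> 0"
  shows "(\<Sum>m\<in>UNIV. ext0 t y $ i $ m * y $ m) = 0"
proof -
  let ?u = "y /\<^sub>R norm y"
  have u: "on_sphere ?u" using assms(2) by (simp add: on_sphere_def)
  have "(\<Sum>m\<in>UNIV. ext0 t y $ i $ m * y $ m) = norm y * (\<Sum>m\<in>UNIV. t ?u $ i $ m * ?u $ m)"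
    using assms(2) by (simp add: ext0_def sum_distrib_left field_simps)
  also have "(\<Sum>m\<in>UNIV. t ?u $ i $ m * ?u $ m) = (t ?u *v ?u) $ i"
    by (simp add: matrix_vector_mult_def)
  also have "\<dots> = 0" using assms(1) u unfolding tangent2_def by simp
  finally show ?thesis by simp
qed

lemma tangent2_col:
  assumes "tangent2 t" "y \<noteq> 0"
  shows "(\<Sum>i\<in>UNIV. y $ i * ext0 t y $ i $ m) = 0"
proof -
  let ?u = "y /\<^sub>R norm y"
  have u: "on_sphere ?u" using assms(2) by (simp add: on_sphere_def)
  have "(\<Sum>i\<in>UNIV. y $ i * ext0 t y $ i $ m) = (\<Sum>i\<in>UNIV. norm y * (t ?u $ i $ m * ?u $ i))"
    using assms(2) by (intro sum.cong refl) (simp add: ext0_def)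
  also have "\<dots> = norm y * (\<Sum>i\<in>UNIV. t ?u $ i $ m * ?u $ i)" by (simp add: sum_distrib_left)
  also have "(\<Sum>i\<in>UNIV. t ?u $ i $ m * ?u $ i) = (?u v* t ?u) $ m"
    by (simp add: vector_matrix_mult_def mult.commute)
  also have "\<dots> = 0" using assms(1) u unfolding tangent2_def by simp
  finally show ?thesis by simp
qed

lemma tangent1_dot:
  assumes "tangent1 a" "y \<noteq> 0"
  shows "(\<Sum>i\<in>UNIV. y $ i * ext0 a y $ i) = 0"
proof -
  let ?u = "y /\<^sub>R norm y"
  have u: "on_sphere ?u" using assms(2) by (simp add: on_sphere_def)
  have "(\<Sum>i\<in>UNIV. y $ i * ext0 a y $ i) = norm y * (\<Sum>i\<in>UNIV. a ?u $ i * ?u $ i)"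
    using assms(2) by (simp add: ext0_def sum_distrib_left field_simps)
  also have "(\<Sum>i\<in>UNIV. a ?u $ i * ?u $ i) = a ?u \<bullet> ?u"
    by (simp add: inner_vec_def)
  also have "\<dots> = 0" using assms(1) u unfolding tangent1_def by blast
  finally show ?thesis by simp
qed

lemma sdiv2_eq:
  assumes t2: "tangent2 t" and tr: "tr3 (t w) = 0" and w: "on_sphere w"
    and dt: "\<And>i j. (\<lambda>y. ext0 t y $ i $ j) differentiable (at w)"
  shows "sdiv2 t w $ j = (\<Sum>i\<in>UNIV. pd i (\<lambda>y. ext0 t y $ i $ j) w)"
proof -
  define D where "D m = (\<Sum>i\<in>UNIV. pd i (\<lambda>y. ext0 t y $ i $ m) w)" for m
  have w0: "w \<noteq> 0" using w by (auto simp: on_sphere_def)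
  have A: "(\<Sum>k\<in>UNIV. proj w i k * pd k (\<lambda>y. ext0 t y $ i $ m) w) = pd i (\<lambda>y. ext0 t y $ i $ m) w" for i m
  proof -
    have e: "(\<Sum>k\<in>UNIV. w $ k * pd k (\<lambda>y. ext0 t y $ i $ m) w) = 0"
      using euler_pd[OF hom0_ext0 dt] .
    have "(\<Sum>k\<in>UNIV. proj w i k * pd k (\<lambda>y. ext0 t y $ i $ m) w)
       = (\<Sum>k\<in>UNIV. (if i = k then pd k (\<lambda>y. ext0 t y $ i $ m) w else 0))
         - w $ i * (\<Sum>k\<in>UNIV. w $ k * pd k (\<lambda>y. ext0 t y $ i $ m) w)"
      by (simp add: proj_def left_diff_distrib sum_subtractf sum_distrib_left mult.assoc if01)
    also have "\<dots> = pd i (\<lambda>y. ext0 t y $ i $ m) w" using e by (simp only: if01 sum.delta sum.delta' UNIV_I if_True finite_class.finite_UNIV)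
    finally show ?thesis .
  qed
  have C: "(\<Sum>m\<in>UNIV. w $ m * D m) = 0"
  proof -
    have g0: "pd i (\<lambda>y. \<Sum>m\<in>UNIV. ext0 t y $ i $ m * y $ m) w = 0" for i
      by (rule pd_zero_on[of "- {0}"]) (use w0 tangent2_row[OF t2] in auto)
    have gd: "pd i (\<lambda>y. \<Sum>m\<in>UNIV. ext0 t y $ i $ m * y $ m) w
       = (\<Sum>m\<in>UNIV. pd i (\<lambda>y. ext0 t y $ i $ m) w * w $ m + (if m = i then 1 else 0) * ext0 t w $ i $ m)" for i
    proof -
      have "((\<lambda>y. \<Sum>m\<in>UNIV. ext0 t y $ i $ m * y $ m) has_derivative
        (\<lambda>h. \<Sum>m\<in>UNIV. ext0 t w $ i $ m * h $ m + frechet_derivative (\<lambda>y. ext0 t y $ i $ m) (at w) h * w $ m)) (at w)"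
        by (intro has_derivative_sum has_derivative_mult bounded_linear_imp_has_derivative bounded_linear_vec_nth)
           (use dt in \<open>auto simp: frechet_derivative_works\<close>)
      then show ?thesis using dt by (simp add: pd_has_derivative pd_frechet axis_def add.commute mult.commute)
    qed
    have "0 = (\<Sum>i\<in>UNIV. \<Sum>m\<in>UNIV. pd i (\<lambda>y. ext0 t y $ i $ m) w * w $ m + (if m = i then 1 else 0) * ext0 t w $ i $ m)"
      using g0 gd by simp
    also have "\<dots> = (\<Sum>i\<in>UNIV. \<Sum>m\<in>UNIV. pd i (\<lambda>y. ext0 t y $ i $ m) w * w $ m) + tr3 (t w)"
      by (simp only: sum.distrib if01 sum.delta UNIV_I if_True finite_class.finite_UNIV ext0_on_sphere[OF w] tr3_def)
    also have "\<dots> = (\<Sum>m\<in>UNIV. w $ m * D m)"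
      unfolding D_def tr by (subst sum.swap) (simp add: sum_distrib_left mult.commute)
    finally show ?thesis by simp
  qed
  have "sdiv2 t w $ j = (\<Sum>m\<in>UNIV. proj w j m * D m)"
    unfolding sdiv2_def D_def using A by simp
  also have "\<dots> = (\<Sum>m\<in>UNIV. (if j = m then D m else 0)) - w $ j * (\<Sum>m\<in>UNIV. w $ m * D m)"
    by (simp add: proj_def left_diff_distrib sum_subtractf sum_distrib_left mult.assoc if01)
  also have "\<dots> = D j" using C by simp
  finally show ?thesis unfolding D_def .
qed


lemma has_derivative_radial:
  assumes "(f has_real_derivative f') (at (norm x))" "x \<noteq> 0"
  shows "((\<lambda>y. f (norm y)) has_derivative (\<lambda>h. f' * inner h (sgn x))) (at x)"
proof -
  have n: "(norm has_derivative (\<lambda>h. inner h (sgn x))) (at x)"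
    using has_derivative_norm[OF assms(2)] by simp
  show ?thesis
    using has_derivative_compose[OF n assms(1)[unfolded has_field_derivative_def]] by simp
qed

lemma pd_radial:
  fixes f :: "real \<Rightarrow> real"
  assumes "f differentiable (at (norm x))" "x \<noteq> 0"
  shows "pd k (\<lambda>y. f (norm y)) x = deriv f (norm x) * x $ k / norm x"
proof -
  have "(f has_real_derivative deriv f (norm x)) (at (norm x))"
    using assms(1) DERIV_deriv_iff_real_differentiable by blast
  from pd_has_derivative[OF has_derivative_radial[of f "deriv f (norm x)" x, OF this assms(2)]]
  show ?thesis by (simp add: inner_axis' sgn_div_norm divide_inverse mult_ac)
qed

lemma diff_radial:
  fixes f :: "real \<Rightarrow> real" and x :: "real^3"
  assumes "f differentiable (at (norm x))" "x \<noteq> 0"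
  shows "(\<lambda>y. f (norm y)) differentiable (at x)"
proof -
  have "(f has_real_derivative deriv f (norm x)) (at (norm x))"
    using assms(1) DERIV_deriv_iff_real_differentiable by blast
  from has_derivative_radial[of f "deriv f (norm x)" x, OF this assms(2)] show ?thesis by (auto simp: differentiable_def)
qed

lemma pd_add:
  assumes "f differentiable (at x)" "g differentiable (at x)"
  shows "pd k (\<lambda>y. f y + g y) x = pd k f x + pd k g x"
proof -
  have "((\<lambda>y. f y + g y) has_derivative (\<lambda>h. frechet_derivative f (at x) h + frechet_derivative g (at x) h)) (at x)"
    using assms by (intro has_derivative_add) (auto simp: frechet_derivative_works)
  then show ?thesis using assms by (simp add: pd_has_derivative pd_frechet)
qed

lemma pd_mult:
  assumes "f differentiable (at x)" "g differentiable (at x)"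
  shows "pd k (\<lambda>y. f y * g y) x = pd k f x * g x + f x * pd k g x"
proof -
  have "((\<lambda>y. f y * g y) has_derivative (\<lambda>h. f x * frechet_derivative g (at x) h + frechet_derivative f (at x) h * g x)) (at x)"
    using assms by (intro has_derivative_mult) (auto simp: frechet_derivative_works)
  then show ?thesis using assms by (simp add: pd_has_derivative pd_frechet)
qed

lemma pd_coord: "pd k (\<lambda>y. y $ j) x = (if k = j then 1 else 0)"
proof -
  have "((\<lambda>y::real^3. y $ j) has_derivative (\<lambda>h. h $ j)) (at x)"
    by (intro bounded_linear_imp_has_derivative bounded_linear_vec_nth)
  then show ?thesis by (simp add: pd_has_derivative axis_def)
qed

lemma diff_coord: "(\<lambda>y::real^3. y $ j) differentiable (at x)"
  using bounded_linear_imp_has_derivative[OF bounded_linear_vec_nth] by (auto simp: differentiable_def)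

lemma deriv_over_sq:
  fixes q :: "real \<Rightarrow> real"
  assumes "q differentiable (at r)" "r \<noteq> 0"
  shows "(\<lambda>s. q s / s^2) differentiable (at r)"
    and "deriv (\<lambda>s. q s / s^2) r = deriv q r / r^2 - 2 * q r / r^3"
proof -
  have d: "(q has_real_derivative deriv q r) (at r)"
    using assms(1) DERIV_deriv_iff_real_differentiable by blast
  have "((\<lambda>s. q s / s^2) has_real_derivative (deriv q r / r^2 - 2 * q r / r^3)) (at r)"
    using assms(2) by (auto intro!: derivative_eq_intros d simp: field_simps power2_eq_square power3_eq_cube)
  then show "(\<lambda>s. q s / s^2) differentiable (at r)" "deriv (\<lambda>s. q s / s^2) r = deriv q r / r^2 - 2 * q r / r^3"
    by (auto simp: real_differentiable_def DERIV_imp_deriv)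
qed

lemma mk_tensor_comp:
  "mk_tensor q a Q t y $ i $ j = q (norm y) / (norm y)^2 * (ext0 a y $ i * y $ j + ext0 a y $ j * y $ i)
      + Q (norm y) / (norm y)^2 * ext0 t y $ i $ j"
  unfolding mk_tensor_def odot_def pb1_def pb2_def dr_def ext0_def
  by (cases "y = 0") (simp_all add: field_simps power2_eq_square)

lemma pd_T:
  fixes F G :: "real \<Rightarrow> real"
  assumes x: "x \<noteq> 0" and dF: "F differentiable (at (norm x))" and dG: "G differentiable (at (norm x))"
    and dAi: "(\<lambda>y. ext0 a y $ i) differentiable (at x)" and dAj: "(\<lambda>y. ext0 a y $ j) differentiable (at x)"
    and dB: "(\<lambda>y. ext0 t y $ i $ j) differentiable (at x)"
  shows "pd k (\<lambda>y. F (norm y) * (ext0 a y $ i * y $ j + ext0 a y $ j * y $ i) + G (norm y) * ext0 t y $ i $ j) x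
    = deriv F (norm x) * x $ k / norm x * (ext0 a x $ i * x $ j + ext0 a x $ j * x $ i)
      + F (norm x) * (pd k (\<lambda>y. ext0 a y $ i) x * x $ j + ext0 a x $ i * (if k = j then 1 else 0)
                     + (pd k (\<lambda>y. ext0 a y $ j) x * x $ i + ext0 a x $ j * (if k = i then 1 else 0)))
      + (deriv G (norm x) * x $ k / norm x * ext0 t x $ i $ j + G (norm x) * pd k (\<lambda>y. ext0 t y $ i $ j) x)"
proof -
  have rF: "(\<lambda>y. F (norm y)) differentiable (at x)" using diff_radial[OF dF x] .
  have rG: "(\<lambda>y. G (norm y)) differentiable (at x)" using diff_radial[OF dG x] .
  note dc = diff_coord[of i x] diff_coord[of j x]
  have m1: "(\<lambda>y. ext0 a y $ i * y $ j) differentiable (at x)" using dAi dc by simp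
  have m2: "(\<lambda>y. ext0 a y $ j * y $ i) differentiable (at x)" using dAj dc by simp
  have s1: "(\<lambda>y. ext0 a y $ i * y $ j + ext0 a y $ j * y $ i) differentiable (at x)" using m1 m2 by simp
  have p1: "(\<lambda>y. F (norm y) * (ext0 a y $ i * y $ j + ext0 a y $ j * y $ i)) differentiable (at x)"
    using rF s1 by simp
  have p2: "(\<lambda>y. G (norm y) * ext0 t y $ i $ j) differentiable (at x)" using rG dB by simp
  show ?thesis
    apply (subst pd_add[OF p1 p2])
    apply (subst pd_mult[OF rF s1])
    apply (subst pd_mult[OF rG dB])
    apply (subst pd_add[OF m1 m2])
    apply (subst pd_mult[OF dAi diff_coord])
    apply (subst pd_mult[OF dAj diff_coord])
    apply (simp only: pd_radial[OF dF x] pd_radial[OF dG x] pd_coord)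
    done
qed

lemma if01r: "(z::real) * (if P then 1 else 0) = (if P then z else 0)" by simp

lemma ifm: "(c::real) * (if P then z else 0) = (if P then c * z else 0)" by simp

lemma sum_sq_norm: "(\<Sum>i\<in>UNIV. (x::real^3) $ i * x $ i) = (norm x)^2"
  by (simp add: power2_norm_eq_inner inner_vec_def)

lemma div_mk:
  fixes q Q :: "real \<Rightarrow> real"
  assumes x: "x \<noteq> 0" and dq: "q differentiable (at (norm x))" and dQ: "Q differentiable (at (norm x))"
    and a1: "tangent1 a" and da: "\<And>l y. y \<noteq> 0 \<Longrightarrow> (\<lambda>y. ext0 a y $ l) differentiable (at y)"
    and t2: "tangent2 t" and ttr: "\<And>w. on_sphere w \<Longrightarrow> tr3 (t w) = 0"
    and dt: "\<And>i j y. y \<noteq> 0 \<Longrightarrow> (\<lambda>y. ext0 t y $ i $ j) differentiable (at y)"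
  shows "div_euc (mk_tensor q a Q t) x $ j =
    (2 * norm x * q (norm x) + (norm x)^2 * deriv q (norm x)) / (norm x)^3 * a (x /\<^sub>R norm x) $ j
    + q (norm x) / (norm x)^2 * sdiv1 a (x /\<^sub>R norm x) * (x $ j / norm x)
    + Q (norm x) / (norm x)^3 * sdiv2 t (x /\<^sub>R norm x) $ j"
proof -
  define r where "r = norm x"
  define w where "w = x /\<^sub>R norm x"
  have r0: "r > 0" using x by (simp add: r_def)
  have w: "on_sphere w" "w \<noteq> 0" using x by (auto simp: w_def on_sphere_def)
  define F where "F = (\<lambda>s. q s / s^2)"
  define G where "G = (\<lambda>s. Q s / s^2)"
  have dF: "F differentiable (at r)" and dF': "deriv F r = deriv q r / r^2 - 2 * q r / r^3"
    using deriv_over_sq[OF dq[folded r_def]] r0 by (auto simp: F_def)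
  have dG: "G differentiable (at r)" and dG': "deriv G r = deriv Q r / r^2 - 2 * Q r / r^3"
    using deriv_over_sq[OF dQ[folded r_def]] r0 by (auto simp: G_def)
  have funT: "(\<lambda>y. mk_tensor q a Q t y $ i $ j) = (\<lambda>y. F (norm y) * (ext0 a y $ i * y $ j + ext0 a y $ j * y $ i) + G (norm y) * ext0 t y $ i $ j)" for i
    by (simp add: mk_tensor_comp F_def G_def)
  have "div_euc (mk_tensor q a Q t) x $ j = (\<Sum>i\<in>UNIV. pd i (\<lambda>y. mk_tensor q a Q t y $ i $ j) x)"
    by (simp add: div_euc_def)
  also have "\<dots> = (\<Sum>i\<in>UNIV.
      deriv F r * x $ i / r * (ext0 a x $ i * x $ j + ext0 a x $ j * x $ i)
      + F r * (pd i (\<lambda>y. ext0 a y $ i) x * x $ j + ext0 a x $ i * (if i = j then 1 else 0)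
                     + (pd i (\<lambda>y. ext0 a y $ j) x * x $ i + ext0 a x $ j * (if i = i then 1 else 0)))
      + (deriv G r * x $ i / r * ext0 t x $ i $ j + G r * pd i (\<lambda>y. ext0 t y $ i $ j) x))"
    unfolding funT r_def using x dF dG da dt
    by (simp add: pd_T r_def)
  also have "\<dots> = deriv F r / r * (x $ j * (\<Sum>i\<in>UNIV. x $ i * ext0 a x $ i) + ext0 a x $ j * (\<Sum>i\<in>UNIV. x $ i * x $ i))
      + F r * (x $ j * (\<Sum>i\<in>UNIV. pd i (\<lambda>y. ext0 a y $ i) x) + ext0 a x $ j
               + (\<Sum>i\<in>UNIV. x $ i * pd i (\<lambda>y. ext0 a y $ j) x) + 3 * ext0 a x $ j)
      + (deriv G r / r * (\<Sum>i\<in>UNIV. x $ i * ext0 t x $ i $ j) + G r * (\<Sum>i\<in>UNIV. pd i (\<lambda>y. ext0 t y $ i $ j) x))"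
    by (simp add: sum.distrib sum_distrib_left sum_divide_distrib algebra_simps if01 if01r ifm)
  also have "\<dots> = deriv F r / r * (ext0 a x $ j * r^2)
      + F r * (x $ j * (sdiv1 a w / r) + 4 * ext0 a x $ j)
      + G r * (sdiv2 t w $ j / r)"
  proof -
    have i1: "(\<Sum>i\<in>UNIV. x $ i * ext0 a x $ i) = 0" by (rule tangent1_dot[OF a1 x])
    have i2: "(\<Sum>i\<in>UNIV. x $ i * x $ i) = r^2" by (simp add: sum_sq_norm r_def)
    have "(\<Sum>i\<in>UNIV. pd i (\<lambda>y. ext0 a y $ i) x) = (\<Sum>i\<in>UNIV. pd i (\<lambda>y. ext0 a y $ i) w / r)"
      using pd_hom0_at[OF hom0_ext0 da[OF w(2), unfolded w_def] x] by (simp add: w_def r_def)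
    also have "\<dots> = sdiv1 a w / r" using sdiv1_eq[OF da[OF w(2)]] by (simp add: sum_divide_distrib)
    finally have i3: "(\<Sum>i\<in>UNIV. pd i (\<lambda>y. ext0 a y $ i) x) = sdiv1 a w / r" .
    have i4: "(\<Sum>i\<in>UNIV. x $ i * pd i (\<lambda>y. ext0 a y $ j) x) = 0"
      by (rule euler_pd[OF hom0_ext0 da[OF x]])
    have i5: "(\<Sum>i\<in>UNIV. x $ i * ext0 t x $ i $ j) = 0" by (rule tangent2_col[OF t2 x])
    have "(\<Sum>i\<in>UNIV. pd i (\<lambda>y. ext0 t y $ i $ j) x) = (\<Sum>i\<in>UNIV. pd i (\<lambda>y. ext0 t y $ i $ j) w / r)"
      using pd_hom0_at[OF hom0_ext0 dt[OF w(2), unfolded w_def] x] by (simp add: w_def r_def)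
    also have "\<dots> = sdiv2 t w $ j / r"
      using sdiv2_eq[OF t2 ttr[OF w(1)] w(1) dt[OF w(2)]] by (simp add: sum_divide_distrib)
    finally have i6: "(\<Sum>i\<in>UNIV. pd i (\<lambda>y. ext0 t y $ i $ j) x) = sdiv2 t w $ j / r" .
    show ?thesis unfolding i1 i2 i3 i4 i5 i6 by (simp add: algebra_simps)
  qed
  also have "\<dots> = (2 * r * q r + r^2 * deriv q r) / r^3 * a w $ j
    + q r / r^2 * sdiv1 a w * (x $ j / r) + Q r / r^3 * sdiv2 t w $ j"
    unfolding dF' using r0 by (simp add: F_def G_def ext0_def w_def r_def field_simps power2_eq_square power3_eq_cube)
  finally show ?thesis unfolding r_def w_def .
qed

lemma diff_transform:
  assumes "g differentiable (at x)" "open S" "x \<in> S" "\<And>y. y \<in> S \<Longrightarrow> f y = g y"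
  shows "f differentiable (at x)"
proof -
  from assms(1) obtain g' where "(g has_derivative g') (at x)" by (auto simp: differentiable_def)
  then have "(f has_derivative g') (at x)"
    by (rule has_derivative_transform_within_open[OF _ assms(2,3)]) (use assms(4) in simp)
  then show ?thesis by (auto simp: differentiable_def)
qed

lemma open_A1: "open A1"
  unfolding A1_def by (intro open_Collect_conj open_Collect_less continuous_intros)

lemma A1_nz: "x \<in> A1 \<Longrightarrow> x \<noteq> 0"
  by (auto simp: A1_def)

lemma A1_norm: "x \<in> A1 \<Longrightarrow> norm x \<in> {1<..<2}"
  by (auto simp: A1_def)

lemma smooth3_diff:
  assumes "smooth3 (- {0}) f" "y \<noteq> 0"
  shows "f differentiable (at y)" "pd k f differentiable (at y)"
proof -
  have o: "open (- {0::real^3})" by auto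
  have "f \<in> partials_of f" "pd k f \<in> partials_of f" by (auto intro: partials_of.intros)
  then show "f differentiable (at y)" "pd k f differentiable (at y)"
    using assms o unfolding smooth3_def by (auto simp: differentiable_on_eq_differentiable_at)
qed

lemma smooth1_diff:
  assumes "smooth1 {1<..<2} p" "s \<in> {1<..<2}"
  shows "p differentiable (at s)" "deriv p differentiable (at s)"
proof -
  have o: "open {1<..<(2::real)}" by auto
  have "((deriv ^^ 0) p) differentiable_on {1<..<2}" "((deriv ^^ 1) p) differentiable_on {1<..<2}"
    using assms(1) unfolding smooth1_def by blast+
  then show "p differentiable (at s)" "deriv p differentiable (at s)"
    using assms(2) o by (auto simp: differentiable_on_eq_differentiable_at)
qed

lemma diff_normalize:
  assumes "y \<noteq> (0::real^3)"
  shows "(\<lambda>z. z /\<^sub>R norm z) differentiable (at y)"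
  using assms by (auto intro!: derivative_intros)

lemma diff_ext0:
  assumes "g differentiable (at (y /\<^sub>R norm y))" "y \<noteq> (0::real^3)"
  shows "(\<lambda>z. g (z /\<^sub>R norm z)) differentiable (at y)"
  by (rule differentiable_compose[OF assms(1) diff_normalize[OF assms(2)]])

lemma diff_sdiv1_ext:
  assumes "\<And>l. smooth3 (- {0}) (\<lambda>y. ext0 a y $ l)" "y \<noteq> 0"
  shows "(\<lambda>z. ext0 (sdiv1 a) z) differentiable (at y)"
proof -
  let ?u = "y /\<^sub>R norm y"
  have u: "?u \<noteq> 0" using assms(2) by simp
  have "(\<lambda>u. \<Sum>k\<in>UNIV. \<Sum>l\<in>UNIV. proj u k l * pd k (\<lambda>y. ext0 a y $ l) u) differentiable (at ?u)"
    unfolding proj_def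
    by (intro differentiable_sum ballI finite_class.finite_UNIV differentiable_mult differentiable_diff differentiable_const
        diff_coord smooth3_diff(2)[OF assms(1) u])
  then have "(\<lambda>u. sdiv1 a u) differentiable (at ?u)" unfolding sdiv1_def .
  then show ?thesis unfolding ext0_def by (rule diff_ext0[OF _ assms(2)])
qed

lemma diff_sdiv2_ext:
  assumes "\<And>i j. smooth3 (- {0}) (\<lambda>y. ext0 t y $ i $ j)" "y \<noteq> 0"
  shows "(\<lambda>z. ext0 (sdiv2 t) z $ j) differentiable (at y)"
proof -
  let ?u = "y /\<^sub>R norm y"
  have u: "?u \<noteq> 0" using assms(2) by simp
  have "(\<lambda>u. \<Sum>m\<in>UNIV. proj u j m * (\<Sum>i\<in>UNIV. \<Sum>k\<in>UNIV. proj u i k * pd k (\<lambda>y. ext0 t y $ i $ m) u)) differentiable (at ?u)"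
    unfolding proj_def
    by (intro differentiable_sum ballI finite_class.finite_UNIV differentiable_mult differentiable_diff differentiable_const
        diff_coord smooth3_diff(2)[OF assms(1) u])
  then have "(\<lambda>u. sdiv2 t u $ j) differentiable (at ?u)" unfolding sdiv2_def by simp
  then show ?thesis unfolding ext0_def by (rule diff_ext0[OF _ assms(2)])
qed

lemma sdiv2_tangent:
  assumes "on_sphere w"
  shows "(\<Sum>j\<in>UNIV. w $ j * sdiv2 t w $ j) = 0"
proof -
  define X where "X m = (\<Sum>i\<in>UNIV. \<Sum>k\<in>UNIV. proj w i k * pd k (\<lambda>y. ext0 t y $ i $ m) w)" for m
  have ww: "(\<Sum>j\<in>UNIV. w $ j * w $ j) = 1" using assms by (simp add: sum_sq_norm on_sphere_def)
  have p: "(\<Sum>j\<in>UNIV. w $ j * proj w j m) = 0" for m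
  proof -
    have "(\<Sum>j\<in>UNIV. w $ j * proj w j m) = (\<Sum>j\<in>UNIV. (if j = m then w $ j else 0)) - (\<Sum>j\<in>UNIV. w $ j * w $ j) * w $ m"
      by (simp add: proj_def algebra_simps sum_subtractf sum_distrib_right sum_distrib_left ifm)
    then show ?thesis using ww by simp
  qed
  have "(\<Sum>j\<in>UNIV. w $ j * sdiv2 t w $ j) = (\<Sum>j\<in>UNIV. \<Sum>m\<in>UNIV. w $ j * proj w j m * X m)"
    by (simp add: sdiv2_def X_def sum_distrib_left mult.assoc)
  also have "\<dots> = (\<Sum>m\<in>UNIV. (\<Sum>j\<in>UNIV. w $ j * proj w j m) * X m)"
    by (subst sum.swap) (simp add: sum_distrib_right)
  also have "\<dots> = 0" using p by simp
  finally show ?thesis .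
qed

lemma Lop_reduce:
  assumes x: "x \<in> A1"
    and d1: "\<And>i j y. y \<in> A1 \<Longrightarrow> (\<lambda>z. S z $ i $ j) differentiable (at y)"
    and d2: "\<And>k i j. pd k (\<lambda>z. S z $ i $ j) differentiable (at x)"
    and tr: "\<And>y. y \<in> A1 \<Longrightarrow> tr3 (S y) = 0"
  shows "Lop S x = (\<Sum>j\<in>UNIV. pd j (\<lambda>y. div_euc S y $ j) x)"
proof -
  have a: "(\<Sum>i\<in>UNIV. pd j (pd i (\<lambda>z. S z $ i $ j)) x) = pd j (\<lambda>y. div_euc S y $ j) x" for j
  proof -
    have "(\<lambda>y. div_euc S y $ j) = (\<lambda>y. \<Sum>i\<in>UNIV. pd i (\<lambda>z. S z $ i $ j) y)" by (simp add: div_euc_def)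
    then show ?thesis using pd_sum[of UNIV "\<lambda>i. pd i (\<lambda>z. S z $ i $ j)" x j] d2 by simp
  qed
  have b: "(\<Sum>i\<in>UNIV. pd j (pd j (\<lambda>z. S z $ i $ i)) x) = 0" for j
  proof -
    have "(\<Sum>i\<in>UNIV. pd j (pd j (\<lambda>z. S z $ i $ i)) x) = pd j (\<lambda>y. \<Sum>i\<in>UNIV. pd j (\<lambda>z. S z $ i $ i) y) x"
      using pd_sum[of UNIV "\<lambda>i. pd j (\<lambda>z. S z $ i $ i)" x j] d2 by simp
    also have "\<dots> = 0"
    proof (rule pd_zero_on[OF open_A1 x])
      fix y assume y: "y \<in> A1"
      have "(\<Sum>i\<in>UNIV. pd j (\<lambda>z. S z $ i $ i) y) = pd j (\<lambda>z. \<Sum>i\<in>UNIV. S z $ i $ i) y"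
        using pd_sum[of UNIV "\<lambda>i z. S z $ i $ i" y j] d1[OF y] by simp
      also have "\<dots> = 0"
        by (rule pd_zero_on[OF open_A1 y]) (use tr in \<open>simp add: tr3_def\<close>)
      finally show "(\<Sum>i\<in>UNIV. pd j (\<lambda>z. S z $ i $ i) y) = 0" .
    qed
    finally show ?thesis .
  qed
  have "Lop S x = (\<Sum>i\<in>UNIV. \<Sum>j\<in>UNIV. pd j (pd i (\<lambda>z. S z $ i $ j)) x) - (\<Sum>i\<in>UNIV. \<Sum>j\<in>UNIV. pd j (pd j (\<lambda>z. S z $ i $ i)) x)"
    by (simp add: Lop_def sum_subtractf)
  also have "\<dots> = (\<Sum>j\<in>UNIV. \<Sum>i\<in>UNIV. pd j (pd i (\<lambda>z. S z $ i $ j)) x) - (\<Sum>j\<in>UNIV. \<Sum>i\<in>UNIV. pd j (pd j (\<lambda>z. S z $ i $ i)) x)"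
    using sum.swap[of "\<lambda>i j. pd j (pd i (\<lambda>z. S z $ i $ j)) x" UNIV UNIV]
      sum.swap[of "\<lambda>i j. pd j (pd j (\<lambda>z. S z $ i $ i)) x" UNIV UNIV] by argo
  also have "\<dots> = (\<Sum>j\<in>UNIV. pd j (\<lambda>y. div_euc S y $ j) x)" using a b by simp
  finally show ?thesis .
qed

lemma deriv_over_cube:
  fixes q :: "real \<Rightarrow> real"
  assumes "q differentiable (at r)" "r \<noteq> 0"
  shows "(\<lambda>s. q s / s^3) differentiable (at r)"
    and "deriv (\<lambda>s. q s / s^3) r = deriv q r / r^3 - 3 * q r / r^4"
proof -
  have d: "(q has_real_derivative deriv q r) (at r)"
    using assms(1) DERIV_deriv_iff_real_differentiable by blast
  have "((\<lambda>s. q s / s^3) has_real_derivative (deriv q r / r^3 - 3 * q r / r^4)) (at r)"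
    using assms(2) by (auto intro!: derivative_eq_intros d simp: field_simps eval_nat_numeral)
  then show "(\<lambda>s. q s / s^3) differentiable (at r)" "deriv (\<lambda>s. q s / s^3) r = deriv q r / r^3 - 3 * q r / r^4"
    by (auto simp: real_differentiable_def DERIV_imp_deriv)
qed

lemma deriv_s_times:
  fixes p :: "real \<Rightarrow> real"
  assumes "p differentiable (at r)"
  shows "deriv (\<lambda>s. s * p s) r = p r + r * deriv p r"
proof -
  have d: "(p has_real_derivative deriv p r) (at r)"
    using assms(1) DERIV_deriv_iff_real_differentiable by blast
  have "((\<lambda>s. s * p s) has_real_derivative (p r + r * deriv p r)) (at r)"
    by (auto intro!: derivative_eq_intros d)
  then show ?thesis by (rule DERIV_imp_deriv)
qed

lemma diff_H:
  fixes p :: "real \<Rightarrow> real"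
  assumes "p differentiable (at r)" "deriv p differentiable (at r)" "r \<noteq> 0"
  shows "(\<lambda>s. (2 * s * p s + s^2 * deriv p s) / s^3) differentiable (at r)"
  using assms by (intro differentiable_divide differentiable_add differentiable_mult differentiable_power
     differentiable_const differentiable_ident) auto

lemma pd_V:
  fixes H K M :: "real \<Rightarrow> real" and e s S :: "real^3 \<Rightarrow> real"
  assumes x: "x \<noteq> 0" and dH: "H differentiable (at (norm x))" and dK: "K differentiable (at (norm x))"
    and dM: "M differentiable (at (norm x))"
    and de: "e differentiable (at x)" and ds: "s differentiable (at x)" and dS: "S differentiable (at x)"
  shows "pd j (\<lambda>y. H (norm y) * e y + K (norm y) * s y * y $ j + M (norm y) * S y) x =
     deriv H (norm x) * x $ j / norm x * e x + H (norm x) * pd j e x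
     + ((deriv K (norm x) * x $ j / norm x * s x + K (norm x) * pd j s x) * x $ j + K (norm x) * s x)
     + (deriv M (norm x) * x $ j / norm x * S x + M (norm x) * pd j S x)"
proof -
  have rH: "(\<lambda>y. H (norm y)) differentiable (at x)" using diff_radial[OF dH x] .
  have rK: "(\<lambda>y. K (norm y)) differentiable (at x)" using diff_radial[OF dK x] .
  have rM: "(\<lambda>y. M (norm y)) differentiable (at x)" using diff_radial[OF dM x] .
  note dc = diff_coord[of j x]
  have m1: "(\<lambda>y. H (norm y) * e y) differentiable (at x)" using rH de by simp
  have m2a: "(\<lambda>y. K (norm y) * s y) differentiable (at x)" using rK ds by simp
  have m2: "(\<lambda>y. K (norm y) * s y * y $ j) differentiable (at x)" using m2a dc by simp
  have m3: "(\<lambda>y. M (norm y) * S y) differentiable (at x)" using rM dS by simp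
  have m12: "(\<lambda>y. H (norm y) * e y + K (norm y) * s y * y $ j) differentiable (at x)" using m1 m2 by simp
  show ?thesis
    apply (subst pd_add[OF m12 m3])
    apply (subst pd_add[OF m1 m2])
    apply (subst pd_mult[OF rH de])
    apply (subst pd_mult[OF m2a dc])
    apply (subst pd_mult[OF rK ds])
    apply (subst pd_mult[OF rM dS])
    apply (simp only: pd_radial[OF dH x] pd_radial[OF dK x] pd_radial[OF dM x] pd_coord)
    apply simp
    done
qed

lemma sym_tr_mk:
  assumes a1: "tangent1 a" and ts: "\<And>w. on_sphere w \<Longrightarrow> symmetric3 (t w) \<and> tr3 (t w) = 0"
    and y: "y \<noteq> 0"
  shows "symmetric3 (mk_tensor q a Q t y) \<and> tr3 (mk_tensor q a Q t y) = 0"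
proof -
  let ?u = "y /\<^sub>R norm y"
  have u: "on_sphere ?u" using y by (simp add: on_sphere_def)
  have sy: "ext0 t y $ i $ j = ext0 t y $ j $ i" for i j
    using ts[OF u] by (simp add: ext0_def symmetric3_def)
  have tr0: "(\<Sum>i\<in>UNIV. ext0 t y $ i $ i) = 0"
    using ts[OF u] by (simp add: ext0_def tr3_def)
  have "tr3 (mk_tensor q a Q t y) = 2 * (q (norm y) / (norm y)^2) * (\<Sum>i\<in>UNIV. y $ i * ext0 a y $ i)
     + Q (norm y) / (norm y)^2 * (\<Sum>i\<in>UNIV. ext0 t y $ i $ i)"
    by (simp add: tr3_def mk_tensor_comp sum.distrib sum_distrib_left sum_divide_distrib algebra_simps)
  also have "\<dots> = 0" using tangent1_dot[OF a1 y] tr0 by simp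
  finally show ?thesis
    by (simp add: symmetric3_def mk_tensor_comp sy algebra_simps)
qed

lemma hom0_ext0_id: "hom0 (ext0 (f :: real^3 \<Rightarrow> real))"
  unfolding hom0_def ext0_def by (auto simp: divide_simps)

lemma Lop_mk:
  fixes p P :: "real \<Rightarrow> real" and eta :: "real^3 \<Rightarrow> real^3" and sigma :: "real^3 \<Rightarrow> real^3^3"
  assumes x: "x \<in> A1" and hp: "smooth1 {1<..<2} p" and hP: "smooth1 {1<..<2} P"
    and heta: "oneform_S2 eta" and hsigma: "tfs_S2 sigma"
  shows "Lop (mk_tensor p eta P sigma) x = (2 * norm x * deriv (\<lambda>s. s * p s) (norm x) * sdiv1 eta (x /\<^sub>R norm x)
      + P (norm x) * sdiv1 (sdiv2 sigma) (x /\<^sub>R norm x)) / (norm x)^4"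
proof -
  have e1: "tangent1 eta" and eS: "\<And>l. smooth3 (- {0}) (\<lambda>y. ext0 eta y $ l)"
    using heta by (auto simp: oneform_S2_def smooth_S2_1_def)
  have s2: "tangent2 sigma" and sS: "\<And>i j. smooth3 (- {0}) (\<lambda>y. ext0 sigma y $ i $ j)"
    and sst: "\<And>w. on_sphere w \<Longrightarrow> symmetric3 (sigma w) \<and> tr3 (sigma w) = 0"
    using hsigma by (auto simp: tfs_S2_def smooth_S2_2_def)
  have ttr: "\<And>w. on_sphere w \<Longrightarrow> tr3 (sigma w) = 0" using sst by blast
  have dE: "\<And>l y. y \<noteq> 0 \<Longrightarrow> (\<lambda>y. ext0 eta y $ l) differentiable (at y)" using smooth3_diff(1)[OF eS] .
  have dB: "\<And>i j y. y \<noteq> 0 \<Longrightarrow> (\<lambda>y. ext0 sigma y $ i $ j) differentiable (at y)" using smooth3_diff(1)[OF sS] .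
  have dpE: "\<And>k l y. y \<noteq> 0 \<Longrightarrow> pd k (\<lambda>y. ext0 eta y $ l) differentiable (at y)" using smooth3_diff(2)[OF eS] .
  have dpB: "\<And>k i j y. y \<noteq> 0 \<Longrightarrow> pd k (\<lambda>y. ext0 sigma y $ i $ j) differentiable (at y)" using smooth3_diff(2)[OF sS] .
  have dp: "\<And>s. s \<in> {1<..<2} \<Longrightarrow> p differentiable (at s)" "\<And>s. s \<in> {1<..<2} \<Longrightarrow> deriv p differentiable (at s)"
    using smooth1_diff[OF hp] by auto
  have dP: "\<And>s. s \<in> {1<..<2} \<Longrightarrow> P differentiable (at s)" "\<And>s. s \<in> {1<..<2} \<Longrightarrow> deriv P differentiable (at s)"
    using smooth1_diff[OF hP] by auto
  define r where "r = norm x"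
  define w where "w = x /\<^sub>R norm x"
  have x0: "x \<noteq> 0" using A1_nz[OF x] .
  have rI: "r \<in> {1<..<2}" using A1_norm[OF x] by (simp add: r_def)
  have r0: "r > 0" using rI by simp
  have w: "on_sphere w" "w \<noteq> 0" using x0 by (auto simp: w_def on_sphere_def)
  define F where "F = (\<lambda>s. p s / s^2)"
  define G where "G = (\<lambda>s. P s / s^2)"
  have dF: "\<And>s. s \<in> {1<..<2} \<Longrightarrow> F differentiable (at s)"
    using deriv_over_sq(1)[OF dp(1)] unfolding F_def by force
  have dG: "\<And>s. s \<in> {1<..<2} \<Longrightarrow> G differentiable (at s)"
    using deriv_over_sq(1)[OF dP(1)] unfolding G_def by force
  have dF': "deriv F differentiable (at r)"
  proof (rule diff_transform[of "\<lambda>s. deriv p s / s^2 - 2 * p s / s^3" r "{1<..<2}"])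
    show "(\<lambda>s. deriv p s / s^2 - 2 * p s / s^3) differentiable (at r)"
      using dp[OF rI] r0 by (intro differentiable_diff differentiable_divide differentiable_mult differentiable_power
         differentiable_const differentiable_ident) auto
    show "\<And>s. s \<in> {1<..<2} \<Longrightarrow> deriv F s = deriv p s / s^2 - 2 * p s / s^3"
      using deriv_over_sq(2)[OF dp(1)] unfolding F_def by force
  qed (use rI in auto)
  have dG': "deriv G differentiable (at r)"
  proof (rule diff_transform[of "\<lambda>s. deriv P s / s^2 - 2 * P s / s^3" r "{1<..<2}"])
    show "(\<lambda>s. deriv P s / s^2 - 2 * P s / s^3) differentiable (at r)"
      using dP[OF rI] r0 by (intro differentiable_diff differentiable_divide differentiable_mult differentiable_power
         differentiable_const differentiable_ident) auto
    show "\<And>s. s \<in> {1<..<2} \<Longrightarrow> deriv G s = deriv P s / s^2 - 2 * P s / s^3"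
      using deriv_over_sq(2)[OF dP(1)] unfolding G_def by force
  qed (use rI in auto)
  have fT: "(\<lambda>y. mk_tensor p eta P sigma y $ i $ j) = (\<lambda>y. F (norm y) * (ext0 eta y $ i * y $ j + ext0 eta y $ j * y $ i) + G (norm y) * ext0 sigma y $ i $ j)" for i j
    by (simp add: mk_tensor_comp F_def G_def)
  have d1: "(\<lambda>z. mk_tensor p eta P sigma z $ i $ j) differentiable (at y)" if y: "y \<in> A1" for i j y
  proof -
    have y0: "y \<noteq> 0" using A1_nz[OF y] .
    have "(\<lambda>y. F (norm y)) differentiable (at y)" "(\<lambda>y. G (norm y)) differentiable (at y)"
      using diff_radial[OF dF y0] diff_radial[OF dG y0] A1_norm[OF y] by auto
    then show ?thesis unfolding fT using dE[OF y0] dB[OF y0] diff_coord by simp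
  qed
  have d2: "pd k (\<lambda>z. mk_tensor p eta P sigma z $ i $ j) differentiable (at x)" for k i j
  proof (rule diff_transform[OF _ open_A1 x])
    show "pd k (\<lambda>z. mk_tensor p eta P sigma z $ i $ j) y =
      deriv F (norm y) * y $ k / norm y * (ext0 eta y $ i * y $ j + ext0 eta y $ j * y $ i)
      + F (norm y) * (pd k (\<lambda>y. ext0 eta y $ i) y * y $ j + ext0 eta y $ i * (if k = j then 1 else 0)
                     + (pd k (\<lambda>y. ext0 eta y $ j) y * y $ i + ext0 eta y $ j * (if k = i then 1 else 0)))
      + (deriv G (norm y) * y $ k / norm y * ext0 sigma y $ i $ j + G (norm y) * pd k (\<lambda>y. ext0 sigma y $ i $ j) y)"
      if y: "y \<in> A1" for y
      unfolding fT using y A1_nz[OF y] A1_norm[OF y]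
      by (intro pd_T dF dG dE dB) auto
    have rr: "(\<lambda>y. deriv F (norm y)) differentiable (at x)" "(\<lambda>y. deriv G (norm y)) differentiable (at x)"
      "(\<lambda>y. F (norm y)) differentiable (at x)" "(\<lambda>y. G (norm y)) differentiable (at x)"
      using diff_radial[OF dF'[unfolded r_def] x0] diff_radial[OF dG'[unfolded r_def] x0] diff_radial[OF dF x0] diff_radial[OF dG x0] rI
      by (auto simp: r_def)
    have nn: "(\<lambda>y. norm y) differentiable (at x)" using x0 by simp
    show "(\<lambda>y. deriv F (norm y) * y $ k / norm y * (ext0 eta y $ i * y $ j + ext0 eta y $ j * y $ i)
      + F (norm y) * (pd k (\<lambda>y. ext0 eta y $ i) y * y $ j + ext0 eta y $ i * (if k = j then 1 else 0)
                     + (pd k (\<lambda>y. ext0 eta y $ j) y * y $ i + ext0 eta y $ j * (if k = i then 1 else 0)))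
      + (deriv G (norm y) * y $ k / norm y * ext0 sigma y $ i $ j + G (norm y) * pd k (\<lambda>y. ext0 sigma y $ i $ j) y))
      differentiable (at x)"
      using rr nn x0 dE[OF x0] dB[OF x0] dpE[OF x0] dpB[OF x0] diff_coord
      by (intro differentiable_add differentiable_mult differentiable_divide differentiable_const) auto
  qed
  have tr: "tr3 (mk_tensor p eta P sigma y) = 0" if "y \<in> A1" for y
    using sym_tr_mk[of eta sigma y p P] e1 sst A1_nz[OF that] by blast
  have L: "Lop (mk_tensor p eta P sigma) x = (\<Sum>j\<in>UNIV. pd j (\<lambda>y. div_euc (mk_tensor p eta P sigma) y $ j) x)"
    by (rule Lop_reduce[OF x d1 d2 tr])
  define H where "H = (\<lambda>s. (2 * s * p s + s^2 * deriv p s) / s^3)"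
  define K where "K = (\<lambda>s. p s / s^3)"
  define M where "M = (\<lambda>s. P s / s^3)"
  define V where "V = (\<lambda>j y. H (norm y) * ext0 eta y $ j + K (norm y) * ext0 (sdiv1 eta) y * y $ j
       + M (norm y) * ext0 (sdiv2 sigma) y $ j)"
  have dv: "div_euc (mk_tensor p eta P sigma) y $ j = V j y" if y: "y \<in> A1" for y j
  proof -
    have y0: "y \<noteq> 0" using A1_nz[OF y] .
    have ny: "norm y > 0" using y0 by simp
    have D: "div_euc (mk_tensor p eta P sigma) y $ j =
      (2 * norm y * p (norm y) + (norm y)\<^sup>2 * deriv p (norm y)) / norm y ^ 3 * eta (y /\<^sub>R norm y) $ j +
      p (norm y) / (norm y)\<^sup>2 * sdiv1 eta (y /\<^sub>R norm y) * (y $ j / norm y) +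
      P (norm y) / norm y ^ 3 * sdiv2 sigma (y /\<^sub>R norm y) $ j"
      by (rule div_mk[OF y0 dp(1)[OF A1_norm[OF y]] dP(1)[OF A1_norm[OF y]] e1 _ s2 ttr]) (use dE dB in auto)
    show ?thesis
      unfolding D V_def H_def K_def M_def ext0_def using ny by (simp add: field_simps eval_nat_numeral)
  qed
  have pdv: "pd j (\<lambda>y. div_euc (mk_tensor p eta P sigma) y $ j) x = pd j (V j) x" for j
    by (rule pd_local[OF open_A1 x]) (use dv in auto)
  have dH: "H differentiable (at r)" unfolding H_def using dp[OF rI] r0 by (intro diff_H) auto
  have dK: "K differentiable (at r)" and dK': "deriv K r = deriv p r / r^3 - 3 * p r / r^4"
    using deriv_over_cube[OF dp(1)[OF rI]] r0 unfolding K_def by auto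
  have dM: "M differentiable (at r)" using deriv_over_cube(1)[OF dP(1)[OF rI]] r0 unfolding M_def by auto
  have dS1: "ext0 (sdiv1 eta) differentiable (at x)" using diff_sdiv1_ext[OF eS x0] by simp
  have dSj: "(\<lambda>z. ext0 (sdiv2 sigma) z $ j) differentiable (at x)" for j using diff_sdiv2_ext[OF sS x0] .
  have pdV: "pd j (V j) x =
     deriv H r * x $ j / r * ext0 eta x $ j + H r * pd j (\<lambda>y. ext0 eta y $ j) x
     + ((deriv K r * x $ j / r * ext0 (sdiv1 eta) x + K r * pd j (ext0 (sdiv1 eta)) x) * x $ j + K r * ext0 (sdiv1 eta) x)
     + (deriv M r * x $ j / r * ext0 (sdiv2 sigma) x $ j + M r * pd j (\<lambda>y. ext0 (sdiv2 sigma) y $ j) x)" for j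
    unfolding V_def r_def
    by (rule pd_V[OF x0 dH[unfolded r_def] dK[unfolded r_def] dM[unfolded r_def] dE[OF x0] dS1 dSj])
  have "Lop (mk_tensor p eta P sigma) x = (\<Sum>j\<in>UNIV. pd j (V j) x)" using L pdv by simp
  also have "\<dots> = deriv H r / r * (\<Sum>j\<in>UNIV. x $ j * ext0 eta x $ j) + H r * (\<Sum>j\<in>UNIV. pd j (\<lambda>y. ext0 eta y $ j) x)
     + deriv K r / r * ext0 (sdiv1 eta) x * (\<Sum>j\<in>UNIV. x $ j * x $ j)
     + K r * (\<Sum>j\<in>UNIV. x $ j * pd j (ext0 (sdiv1 eta)) x) + 3 * K r * ext0 (sdiv1 eta) x
     + deriv M r / r * (\<Sum>j\<in>UNIV. x $ j * ext0 (sdiv2 sigma) x $ j) + M r * (\<Sum>j\<in>UNIV. pd j (\<lambda>y. ext0 (sdiv2 sigma) y $ j) x)"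
    unfolding pdV by (simp add: sum.distrib sum_distrib_left sum_divide_distrib algebra_simps)
  also have "\<dots> = H r * (sdiv1 eta w / r) + deriv K r / r * sdiv1 eta w * r^2 + 3 * K r * sdiv1 eta w
     + M r * (sdiv1 (sdiv2 sigma) w / r)"
  proof -
    have j1: "(\<Sum>j\<in>UNIV. x $ j * ext0 eta x $ j) = 0" by (rule tangent1_dot[OF e1 x0])
    have "(\<Sum>i\<in>UNIV. pd i (\<lambda>y. ext0 eta y $ i) x) = (\<Sum>i\<in>UNIV. pd i (\<lambda>y. ext0 eta y $ i) w / r)"
      using pd_hom0_at[OF hom0_ext0 dE[OF w(2), unfolded w_def] x0] by (simp add: w_def r_def)
    also have "\<dots> = sdiv1 eta w / r" using sdiv1_eq[OF dE[OF w(2)]] by (simp add: sum_divide_distrib)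
    finally have j2: "(\<Sum>i\<in>UNIV. pd i (\<lambda>y. ext0 eta y $ i) x) = sdiv1 eta w / r" .
    have j3: "(\<Sum>j\<in>UNIV. x $ j * x $ j) = r^2" by (simp add: sum_sq_norm r_def)
    have j4: "(\<Sum>j\<in>UNIV. x $ j * pd j (ext0 (sdiv1 eta)) x) = 0"
      by (rule euler_pd[OF hom0_ext0_id dS1])
    have "(\<Sum>j\<in>UNIV. x $ j * ext0 (sdiv2 sigma) x $ j) = r * (\<Sum>j\<in>UNIV. w $ j * sdiv2 sigma w $ j)"
    proof -
      have "(\<Sum>j\<in>UNIV. x $ j * ext0 (sdiv2 sigma) x $ j) = (\<Sum>j\<in>UNIV. r * (w $ j * sdiv2 sigma w $ j))"
        using x0 by (intro sum.cong refl) (simp add: ext0_def w_def r_def)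
      then show ?thesis by (simp add: sum_distrib_left)
    qed
    then have j5: "(\<Sum>j\<in>UNIV. x $ j * ext0 (sdiv2 sigma) x $ j) = 0" using sdiv2_tangent[OF w(1)] by simp
    have dSw: "(\<lambda>z. ext0 (sdiv2 sigma) z $ j) differentiable (at w)" for j using diff_sdiv2_ext[OF sS w(2)] .
    have "(\<Sum>i\<in>UNIV. pd i (\<lambda>y. ext0 (sdiv2 sigma) y $ i) x) = (\<Sum>i\<in>UNIV. pd i (\<lambda>y. ext0 (sdiv2 sigma) y $ i) w / r)"
      using pd_hom0_at[OF hom0_ext0 dSw[unfolded w_def] x0] by (simp add: w_def r_def)
    also have "\<dots> = sdiv1 (sdiv2 sigma) w / r" using sdiv1_eq[OF dSw] by (simp add: sum_divide_distrib)
    finally have j6: "(\<Sum>i\<in>UNIV. pd i (\<lambda>y. ext0 (sdiv2 sigma) y $ i) x) = sdiv1 (sdiv2 sigma) w / r" .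
    have j7: "ext0 (sdiv1 eta) x = sdiv1 eta w" by (simp add: ext0_def w_def)
    show ?thesis unfolding j1 j2 j3 j4 j5 j6 j7 by (simp add: algebra_simps)
  qed
  also have "\<dots> = (2 * r * deriv (\<lambda>s. s * p s) r * sdiv1 eta w + P r * sdiv1 (sdiv2 sigma) w) / r^4"
    unfolding dK' deriv_s_times[OF dp(1)[OF rI]] using r0
    by (simp add: H_def K_def M_def field_simps eval_nat_numeral)
  finally show ?thesis unfolding r_def w_def .
qed

lemma deriv_sq_times:
  fixes q :: "real \<Rightarrow> real"
  assumes "q differentiable (at r)"
  shows "deriv (\<lambda>s. s\<^sup>2 * q s) r = 2 * r * q r + r^2 * deriv q r"
proof -
  have d: "(q has_real_derivative deriv q r) (at r)"
    using assms(1) DERIV_deriv_iff_real_differentiable by blast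
  have "((\<lambda>s. s\<^sup>2 * q s) has_real_derivative (2 * r * q r + r^2 * deriv q r)) (at r)"
    by (auto intro!: derivative_eq_intros d simp: algebra_simps)
  then show ?thesis by (rule DERIV_imp_deriv)
qed

lemma div_zero_iff:
  fixes q Q :: "real \<Rightarrow> real"
  assumes x: "x \<in> A1" and hq: "smooth1 {1<..<2} q" and hQ: "smooth1 {1<..<2} Q"
    and halpha: "oneform_S2 alpha" and htau: "tfs_S2 tau"
  shows "div_euc (mk_tensor q alpha Q tau) x = 0 \<longleftrightarrow>
     (q (norm x) * sdiv1 alpha (x /\<^sub>R norm x) = 0 \<and>
      deriv (\<lambda>s. s\<^sup>2 * q s) (norm x) *\<^sub>R alpha (x /\<^sub>R norm x) + Q (norm x) *\<^sub>R sdiv2 tau (x /\<^sub>R norm x) = 0)"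
proof -
  have a1: "tangent1 alpha" and aS: "\<And>l. smooth3 (- {0}) (\<lambda>y. ext0 alpha y $ l)"
    using halpha by (auto simp: oneform_S2_def smooth_S2_1_def)
  have t2: "tangent2 tau" and tS: "\<And>i j. smooth3 (- {0}) (\<lambda>y. ext0 tau y $ i $ j)"
    and ttr: "\<And>w. on_sphere w \<Longrightarrow> tr3 (tau w) = 0"
    using htau by (auto simp: tfs_S2_def smooth_S2_2_def)
  define r where "r = norm x"
  define w where "w = x /\<^sub>R norm x"
  have x0: "x \<noteq> 0" using A1_nz[OF x] .
  have rI: "r \<in> {1<..<2}" using A1_norm[OF x] by (simp add: r_def)
  have r0: "r > 0" using rI by simp
  have w: "on_sphere w" using x0 by (auto simp: w_def on_sphere_def)
  have dq: "q differentiable (at r)" using smooth1_diff[OF hq rI] by simp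
  have dQ: "Q differentiable (at r)" using smooth1_diff[OF hQ rI] by simp
  define U where "U = deriv (\<lambda>s. s\<^sup>2 * q s) r *\<^sub>R alpha w + Q r *\<^sub>R sdiv2 tau w"
  define c where "c = q r / r^2 * sdiv1 alpha w"
  have V: "div_euc (mk_tensor q alpha Q tau) x = (1 / r^3) *\<^sub>R U + c *\<^sub>R w"
  unfolding vec_eq_iff
  proof
    fix j
    have "div_euc (mk_tensor q alpha Q tau) x $ j =
      (2 * r * q r + r^2 * deriv q r) / r^3 * alpha w $ j + q r / r^2 * sdiv1 alpha w * (x $ j / r)
      + Q r / r^3 * sdiv2 tau w $ j"
      unfolding r_def w_def
      by (rule div_mk[OF x0 dq[unfolded r_def] dQ[unfolded r_def] a1 _ t2 ttr])
         (use smooth3_diff(1)[OF aS] smooth3_diff(1)[OF tS] in auto)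
    then show "div_euc (mk_tensor q alpha Q tau) x $ j = ((1 / r^3) *\<^sub>R U + c *\<^sub>R w) $ j"
      unfolding U_def c_def deriv_sq_times[OF dq] using r0
      by (simp add: w_def r_def field_simps)
  qed
  have aw: "alpha w \<bullet> w = 0" using a1 w unfolding tangent1_def by blast
  have Sw: "sdiv2 tau w \<bullet> w = 0" using sdiv2_tangent[OF w, of tau] by (simp add: inner_vec_def mult.commute)
  have ww: "w \<bullet> w = 1" using w by (simp add: on_sphere_def inner_commute power2_norm_eq_inner[symmetric])
  have Uw: "U \<bullet> w = 0" unfolding U_def by (simp add: inner_add_left aw Sw)
  show ?thesis
  proof
    assume "div_euc (mk_tensor q alpha Q tau) x = 0"
    then have z: "(1 / r^3) *\<^sub>R U + c *\<^sub>R w = 0" using V by simp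
    then have "((1 / r^3) *\<^sub>R U + c *\<^sub>R w) \<bullet> w = 0" by simp
    then have c0: "c = 0" by (simp add: inner_add_left Uw ww)
    then have "U = 0" using z r0 by simp
    moreover have "q r * sdiv1 alpha w = 0" using c0 r0 by (simp add: c_def)
    ultimately show "q (norm x) * sdiv1 alpha (x /\<^sub>R norm x) = 0 \<and>
      deriv (\<lambda>s. s\<^sup>2 * q s) (norm x) *\<^sub>R alpha (x /\<^sub>R norm x) + Q (norm x) *\<^sub>R sdiv2 tau (x /\<^sub>R norm x) = 0"
      by (simp add: U_def r_def w_def)
  next
    assume h: "q (norm x) * sdiv1 alpha (x /\<^sub>R norm x) = 0 \<and>
      deriv (\<lambda>s. s\<^sup>2 * q s) (norm x) *\<^sub>R alpha (x /\<^sub>R norm x) + Q (norm x) *\<^sub>R sdiv2 tau (x /\<^sub>R norm x) = 0"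
    then have "U = 0" "c = 0" by (simp_all add: U_def c_def r_def w_def)
    then show "div_euc (mk_tensor q alpha Q tau) x = 0" using V by simp
  qed
qed

theorem lemma2p1:
  fixes q Q p P :: "real \<Rightarrow> real"
    and alpha eta :: "real^3 \<Rightarrow> real^3"
    and tau sigma :: "real^3 \<Rightarrow> real^3^3"
  assumes hq: "smooth1 {1<..<2} q" and hQ: "smooth1 {1<..<2} Q"
    and hp: "smooth1 {1<..<2} p" and hP: "smooth1 {1<..<2} P"
    and halpha: "oneform_S2 alpha" and htau: "tfs_S2 tau"
    and heta: "oneform_S2 eta" and hsigma: "tfs_S2 sigma"
    and hq_nontriv: "\<exists>r\<in>{1<..<2}. q r \<noteq> 0"
  shows
    "(\<forall>x\<in>A1. symmetric3 (mk_tensor q alpha Q tau x) \<and> tr3 (mk_tensor q alpha Q tau x) = 0)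
     \<and> ((\<forall>x\<in>A1. div_euc (mk_tensor q alpha Q tau) x = 0) \<longleftrightarrow>
          ((\<forall>w. on_sphere w \<longrightarrow> sdiv1 alpha w = 0) \<and>
           (\<forall>x\<in>A1. deriv (\<lambda>s. s\<^sup>2 * q s) (norm x) *\<^sub>R alpha (x /\<^sub>R norm x)
                     + Q (norm x) *\<^sub>R sdiv2 tau (x /\<^sub>R norm x) = 0)))
     \<and> (\<forall>x\<in>A1. symmetric3 (mk_tensor p eta P sigma x) \<and> tr3 (mk_tensor p eta P sigma x) = 0)
     \<and> ((\<forall>x\<in>A1. 2 * norm x * deriv (\<lambda>s. s * p s) (norm x) * sdiv1 eta (x /\<^sub>R norm x)
                 + P (norm x) * sdiv1 (sdiv2 sigma) (x /\<^sub>R norm x) = 0)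
        \<longrightarrow> (\<forall>x\<in>A1. Lop (mk_tensor p eta P sigma) x = 0))"
proof -
  have a1: "tangent1 alpha" using halpha by (simp add: oneform_S2_def)
  have tsym: "\<And>w. on_sphere w \<Longrightarrow> symmetric3 (tau w) \<and> tr3 (tau w) = 0" using htau by (simp add: tfs_S2_def)
  have e1: "tangent1 eta" using heta by (simp add: oneform_S2_def)
  have ssym: "\<And>w. on_sphere w \<Longrightarrow> symmetric3 (sigma w) \<and> tr3 (sigma w) = 0" using hsigma by (simp add: tfs_S2_def)
  have P1: "\<forall>x\<in>A1. symmetric3 (mk_tensor q alpha Q tau x) \<and> tr3 (mk_tensor q alpha Q tau x) = 0"
    using sym_tr_mk[of alpha tau _ q Q] a1 tsym A1_nz by blast
  have P3: "\<forall>x\<in>A1. symmetric3 (mk_tensor p eta P sigma x) \<and> tr3 (mk_tensor p eta P sigma x) = 0"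
    using sym_tr_mk[of eta sigma _ p P] e1 ssym A1_nz by blast
  have P2: "(\<forall>x\<in>A1. div_euc (mk_tensor q alpha Q tau) x = 0) \<longleftrightarrow>
          ((\<forall>w. on_sphere w \<longrightarrow> sdiv1 alpha w = 0) \<and>
           (\<forall>x\<in>A1. deriv (\<lambda>s. s\<^sup>2 * q s) (norm x) *\<^sub>R alpha (x /\<^sub>R norm x)
                     + Q (norm x) *\<^sub>R sdiv2 tau (x /\<^sub>R norm x) = 0))"
  proof
    assume H: "\<forall>x\<in>A1. div_euc (mk_tensor q alpha Q tau) x = 0"
    obtain r0 where r0: "r0 \<in> {1<..<2}" "q r0 \<noteq> 0" using hq_nontriv by blast
    have S: "sdiv1 alpha w = 0" if w: "on_sphere w" for w
    proof -
      have nw: "norm w = 1" using w by (simp add: on_sphere_def)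
      define x where "x = r0 *\<^sub>R w"
      have nx: "norm x = r0" using r0 nw by (simp add: x_def)
      have xA: "x \<in> A1" using r0 nx by (simp add: A1_def)
      have xw: "x /\<^sub>R norm x = w" using nx r0 by (simp add: x_def)
      have "q (norm x) * sdiv1 alpha (x /\<^sub>R norm x) = 0"
        using div_zero_iff[OF xA hq hQ halpha htau] H xA by blast
      then have "q r0 * sdiv1 alpha w = 0" unfolding xw by (simp only: nx)
      then show ?thesis using r0 by simp
    qed
    show "(\<forall>w. on_sphere w \<longrightarrow> sdiv1 alpha w = 0) \<and>
           (\<forall>x\<in>A1. deriv (\<lambda>s. s\<^sup>2 * q s) (norm x) *\<^sub>R alpha (x /\<^sub>R norm x)
                     + Q (norm x) *\<^sub>R sdiv2 tau (x /\<^sub>R norm x) = 0)"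
      using S div_zero_iff[OF _ hq hQ halpha htau] H by blast
  next
    assume H: "(\<forall>w. on_sphere w \<longrightarrow> sdiv1 alpha w = 0) \<and>
           (\<forall>x\<in>A1. deriv (\<lambda>s. s\<^sup>2 * q s) (norm x) *\<^sub>R alpha (x /\<^sub>R norm x)
                     + Q (norm x) *\<^sub>R sdiv2 tau (x /\<^sub>R norm x) = 0)"
    show "\<forall>x\<in>A1. div_euc (mk_tensor q alpha Q tau) x = 0"
    proof
      fix x assume xA: "x \<in> A1"
      have "on_sphere (x /\<^sub>R norm x)" using A1_nz[OF xA] by (simp add: on_sphere_def)
      then have "sdiv1 alpha (x /\<^sub>R norm x) = 0" using H by blast
      then show "div_euc (mk_tensor q alpha Q tau) x = 0"
        using div_zero_iff[OF xA hq hQ halpha htau] H xA by simp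
    qed
  qed
  have P4: "(\<forall>x\<in>A1. 2 * norm x * deriv (\<lambda>s. s * p s) (norm x) * sdiv1 eta (x /\<^sub>R norm x)
                 + P (norm x) * sdiv1 (sdiv2 sigma) (x /\<^sub>R norm x) = 0)
        \<longrightarrow> (\<forall>x\<in>A1. Lop (mk_tensor p eta P sigma) x = 0)"
    using Lop_mk[OF _ hp hP heta hsigma] by simp
  show ?thesis using P1 P2 P3 P4 by blast
qed

end
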